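(* Let $g:(0,\infty)\to(0,\infty)$ be a function which is constant on the interval $(0,4)$ and such that, for some positive real number $K$, $g(x)=K\left(\frac{x}{2}+1\right)g\left(\frac{x}{2}+1\right)$ for all $x\ge4$. Then there exists a positive real number $c$ such that $g(x)<x^{\log_2(x)/2+c}$ for every sufficiently large real number $x$. *)

theory Defs
  imports Complex_Main
begin

end

theory Submission
  imports Defs
begin

lemma main_bound:
  fixes G :: "real \<Rightarrow> real" and C D a :: real
  assumes base: "\<And>t. 0 < t \<Longrightarrow> t < 2 \<Longrightarrow> G t = a"
    and step: "\<And>t. t \<ge> 2 \<Longrightarrow> G t \<le> C * t * G (t/2)"
    and Cpos: "C > 0" and D: "D \<ge> log 2 C + 1/2" and apos: "a > 0"
  shows "\<forall>t. 0 < t \<and> t < 2 * 2^n \<longrightarrow>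
     G t \<le> a * 2 powr (D^2/2) * 2 powr ((log 2 t)^2/2 + D * log 2 t)"
proof (induction n)
  have B: "G t \<le> a * 2 powr (D^2/2) * 2 powr ((log 2 t)^2/2 + D * log 2 t)"
    if "0 < t" "t < 2" for t
  proof -
    have "0 \<le> (D + log 2 t)^2/2" by simp
    hence "0 \<le> D^2/2 + ((log 2 t)^2/2 + D * log 2 t)" by (simp add: power2_eq_square algebra_simps)
    hence "1 \<le> 2 powr (D^2/2 + ((log 2 t)^2/2 + D * log 2 t))" by (simp add: ge_one_powr_ge_zero)
    hence "1 \<le> 2 powr (D^2/2) * 2 powr ((log 2 t)^2/2 + D * log 2 t)" by (simp add: powr_add)
    hence "a * 1 \<le> a * (2 powr (D^2/2) * 2 powr ((log 2 t)^2/2 + D * log 2 t))"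
      using apos by (intro mult_left_mono) auto
    thus ?thesis using base[OF that] by simp
  qed
  {
    case 0 show ?case using B by simp
  next
    case (Suc n)
    show ?case
    proof (intro allI impI)
      fix t :: real assume t: "0 < t \<and> t < 2 * 2 ^ Suc n"
      show "G t \<le> a * 2 powr (D^2/2) * 2 powr ((log 2 t)^2/2 + D * log 2 t)"
      proof (cases "t < 2")
        case True then show ?thesis using B t by blast
      next
        case False
        hence t2: "t \<ge> 2" by simp
        have "t/2 < 2 * 2^n" using t by simp
        hence IH: "G (t/2) \<le> a * 2 powr (D^2/2) * 2 powr ((log 2 (t/2))^2/2 + D * log 2 (t/2))"
          using Suc t by auto
        define s where "s = log 2 t"
        have ls: "log 2 (t/2) = s - 1" using t by (simp add: s_def log_divide)
        have Ct: "C * t = 2 powr (log 2 C + s)" using t Cpos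
          by (simp add: s_def powr_add)
        have "G t \<le> C * t * G (t/2)" using step t2 .
        also have "\<dots> \<le> C * t * (a * 2 powr (D^2/2) * 2 powr ((s-1)^2/2 + D * (s-1)))"
          using IH ls Cpos t by (intro mult_left_mono) auto
        also have "\<dots> = a * 2 powr (D^2/2) * 2 powr (log 2 C + s + ((s-1)^2/2 + D * (s-1)))"
          by (simp add: Ct powr_add)
        also have "\<dots> \<le> a * 2 powr (D^2/2) * 2 powr (s^2/2 + D * s)"
        proof -
          have "log 2 C + s + ((s-1)^2/2 + D * (s-1)) \<le> s^2/2 + D * s"
          proof -
            have "(s-1)^2/2 = s^2/2 - s + 1/2" by (simp add: power2_eq_square field_simps)
            moreover have "D * (s-1) = D*s - D" by (simp add: algebra_simps)
            ultimately show ?thesis using D by linarith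
          qed
          hence "2 powr (log 2 C + s + ((s-1)^2/2 + D * (s-1))) \<le> 2 powr (s^2/2 + D * s)"
            by simp
          thus ?thesis using apos by (intro mult_left_mono) auto
        qed
        finally show ?thesis by (simp add: s_def)
      qed
    qed
  }
qed

theorem lemma8p7:
  fixes g :: "real \<Rightarrow> real" and K :: real
  assumes pos: "\<And>x. x > 0 \<Longrightarrow> g x > 0"
    and const: "\<exists>a. \<forall>x. 0 < x \<and> x < 4 \<longrightarrow> g x = a"
    and Kpos: "K > 0"
    and rec: "\<And>x. x \<ge> 4 \<Longrightarrow> g x = K * (x / 2 + 1) * g (x / 2 + 1)"
  shows "\<exists>c>0. \<forall>\<^sub>F x in at_top. g x < x powr (log 2 x / 2 + c)"
proof -
  obtain a where a: "\<And>x. 0 < x \<Longrightarrow> x < 4 \<Longrightarrow> g x = a" using const by blast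
  have apos: "a > 0" using a[of 3] pos[of 3] by simp
  define C where "C = 3 * K / 2"
  define D where "D = max 1 (log 2 C + 1/2)"
  define A where "A = a * 2 powr (D^2/2)"
  define G where "G t = g (t + 2)" for t
  have Cpos: "C > 0" using Kpos by (simp add: C_def)
  have Dpos: "D > 0" by (simp add: D_def)
  have bnd: "G t \<le> A * 2 powr ((log 2 t)^2/2 + D * log 2 t)" if "t > 0" for t
  proof -
    have "\<forall>t. 0 < t \<and> t < 2 * 2^n \<longrightarrow>
     G t \<le> a * 2 powr (D^2/2) * 2 powr ((log 2 t)^2/2 + D * log 2 t)" for n
    proof (rule main_bound[OF _ _ Cpos _ apos])
      show "G t = a" if "0 < t" "t < 2" for t using a that by (simp add: G_def)
      show "D \<ge> log 2 C + 1/2" by (simp add: D_def)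
      show "G t \<le> C * t * G (t/2)" if "t \<ge> 2" for t
      proof -
        have e: "(t+2)/2 + 1 = t/2 + 2" by simp
        have "G t = K * (t/2 + 2) * G (t/2)"
          using rec[of "t+2"] that unfolding G_def e by simp
        also have "\<dots> \<le> K * (3/2 * t) * G (t/2)"
          using that Kpos pos[of "t/2+2"] by (intro mult_right_mono mult_left_mono) (auto simp: G_def)
        finally show ?thesis by (simp add: C_def)
      qed
    qed
    moreover obtain n :: nat where "t < 2 ^ n" using real_arch_pow[of 2 t] by auto
    moreover have "t < 2 * 2^n" using \<open>t < 2^n\<close> zero_less_power[of "2::real" n] by linarith
    ultimately show ?thesis using that unfolding A_def by blast
  qed
  show ?thesis
  proof (intro exI[of _ "D + 1"] conjI)
    show "D + 1 > 0" using Dpos by simp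
    have ev: "\<forall>\<^sub>F x in at_top. x > max 3 A" by (rule eventually_gt_at_top)
    show "\<forall>\<^sub>F x in at_top. g x < x powr (log 2 x / 2 + (D + 1))"
    proof (rule eventually_mono[OF ev])
      fix x assume x: "max 3 A < x"
      define s where "s = log 2 (x - 2)"
      define u where "u = log 2 x"
      have s0: "s \<ge> 0" using x by (simp add: s_def)
      have su: "s \<le> u" using x by (simp add: s_def u_def)
      have "g x = G (x - 2)" by (simp add: G_def)
      also have "\<dots> \<le> A * 2 powr (s^2/2 + D * s)" using bnd[of "x-2"] x by (simp add: s_def)
      also have "\<dots> \<le> A * 2 powr (u^2/2 + D * u)"
      proof -
        have "s^2 \<le> u^2" using s0 su by (simp add: power_mono)
        hence "s^2/2 + D * s \<le> u^2/2 + D*u" using Dpos su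
        proof -
          have "D * s \<le> D * u" using Dpos su by (intro mult_left_mono) auto
          thus ?thesis using \<open>s^2 \<le> u^2\<close> by linarith
        qed
        moreover have "A > 0" using apos by (simp add: A_def)
        ultimately show ?thesis by (intro mult_left_mono) auto
      qed
      also have "\<dots> < x * 2 powr (u^2/2 + D * u)" using x by simp
      also have "\<dots> = x powr (log 2 x / 2 + (D + 1))"
      proof -
        have "x powr (log 2 x / 2 + (D + 1)) = (2 powr u) powr (u/2 + (D+1))"
          using x by (simp add: u_def)
        also have "\<dots> = 2 powr (u^2/2 + D*u + u)"
          by (simp add: powr_powr power2_eq_square algebra_simps)
        also have "\<dots> = x * 2 powr (u^2/2 + D * u)"
          using x by (simp add: powr_add u_def)
        finally show ?thesis by simp
      qed
      finally show "g x < x powr (log 2 x / 2 + (D + 1))" .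
    qed
  qed
qed

end
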